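(* Let $N\ge1$ be an integer and $\alpha,\beta,\gamma,\eta,\rho$ complex constants with $\beta\neq0$, $\gamma\neq0$, $\gamma\neq1$, and set $a=\alpha+\frac{\eta\rho}{1-\gamma}$, $b=\frac{\beta\rho}{1-\gamma}$, assuming $a\neq0$. For $N$-tuples $\underline z=(z_1,\dots,z_N)$, $\underline{\tilde z}=(\tilde z_1,\dots,\tilde z_N)$ define $$\hat g_n(\underline z,\underline{\tilde z})=a^{1-N}(\eta\tilde z_n+\beta)\left[\prod_{j=1}^{N}\frac{\tilde z_n-a z_j-b}{\eta z_j+\beta}\right]\left[\prod_{j=1,\,j\neq n}^{N}\frac{\eta\tilde z_j+a\beta-b\eta}{\tilde z_n-\tilde z_j}\right],\qquad n=1,\dots,N.$$ Let $\big(z_1(\ell),\dots,z_N(\ell)\big)$, $\ell=0,1,2,\dots$, be a sequence of $N$-tuples of complex numbers such that for every $\ell\ge0$ the numbers $z_1(\ell+2),\dots,z_N(\ell+2)$ are (in some order, with multiplicity) the $N$ roots in $z$ of $$\sum_{k=1}^{N}\frac{\hat g_k\big(\underline z(\ell),\underline z(\ell+1)\big)}{z-a\,z_k(\ell+1)-b}=\frac1\gamma .$$ Let $Z(\ell)=\mathrm{diag}\big(z_1(\ell),\dots,z_N(\ell)\big)$, $U(0)=Z(0)$, let $M(0)$ be the $N\times N$ matrix with entries $M_{nm}(0)=\hat g_m\big(\underline z(0),\underline z(1)\big)/\big(z_m(1)-a z_n(0)-b\big)$, and $$V(0)=[\eta Z(0)+\beta I]^{-1}\big\{M(0)Z(1)[M(0)]^{-1}-\alpha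 Z(0)\big\},$$ $A=\eta V(0)-\frac{\eta}{\beta}b\,I$, $B=\beta V(0)-bI$, $P(\ell_1,\ell_2)=\prod_{j=\ell_1}^{\ell_2}(A\gamma^{j}+aI)$ (equal to $I$ if $\ell_1>\ell_2$; the factors commute), and $$U(\ell)=U(0)P(0,\ell-1)+\sum_{k=1}^{\ell}\big(B\gamma^{k-1}+bI\big)P(k,\ell-1)$$ (the sum being $0$ if $\ell=0$). Then for every $\ell\ge0$ the multiset $\{z_1(\ell),\dots,z_N(\ell)\}$ coincides with the multiset of eigenvalues of $U(\ell)$.
   Context: $I$ is the $N\times N$ identity matrix. Throughout, data are assumed generic: for every $\ell$ the $z_n(\ell)$ are pairwise distinct, all denominators appearing are nonzero, and the matrices $M(0)$ and $\eta Z(0)+\beta I$ are invertible. *)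

theory Defs
  imports "Jordan_Normal_Form.Char_Poly" "Jordan_Normal_Form.Gauss_Jordan_Elimination"
begin

text \<open>Indices are 0-based: the paper's z_1..z_N are z 0 .. z (N-1).
  A tuple is a function nat => complex, only its values below N matter.\<close>

definition ghat :: "nat \<Rightarrow> complex \<Rightarrow> complex \<Rightarrow> complex \<Rightarrow> complex
     \<Rightarrow> (nat \<Rightarrow> complex) \<Rightarrow> (nat \<Rightarrow> complex) \<Rightarrow> nat \<Rightarrow> complex" where
  "ghat N a b \<eta> \<beta> z zt n =
     a powi (1 - int N) * (\<eta> * zt n + \<beta>)
     * (\<Prod>j<N. (zt n - a * z j - b) / (\<eta> * z j + \<beta>))
     * (\<Prod>j\<in>{..<N} - {n}. (\<eta> * zt j + a * \<beta> - b * \<eta>) / (zt n - zt j))"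

definition mat_prod_list :: "nat \<Rightarrow> complex mat list \<Rightarrow> complex mat" where
  "mat_prod_list N Ms = foldr (*) Ms (1\<^sub>m N)"

definition mat_sum_list :: "nat \<Rightarrow> complex mat list \<Rightarrow> complex mat" where
  "mat_sum_list N Ms = foldr (+) Ms (0\<^sub>m N N)"

definition minv :: "complex mat \<Rightarrow> complex mat" where
  "minv A = the (mat_inverse A)"

definition eigenvalue_mset :: "complex mat \<Rightarrow> complex multiset" where
  "eigenvalue_mset A = proots (char_poly A)"

end

theory Submission
  imports Defs
begin



lemma lagrange:
  fixes x :: "nat \<Rightarrow> complex" and h :: "complex poly"
  assumes inj: "inj_on x {..<N}" and deg: "degree h < N"
  shows "poly h w = (\<Sum>m<N. poly h (x m) * (\<Prod>j\<in>{..<N}-{m}. (w - x j)) / (\<Prod>j\<in>{..<N}-{m}. (x m - x j)))"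
proof -
  define L where "L = (\<Sum>m<N. Polynomial.smult (poly h (x m) / (\<Prod>j\<in>{..<N}-{m}. (x m - x j))) (\<Prod>j\<in>{..<N}-{m}. [:-x j, 1:]))"
  have polyL: "poly L w = (\<Sum>m<N. poly h (x m) * (\<Prod>j\<in>{..<N}-{m}. (w - x j)) / (\<Prod>j\<in>{..<N}-{m}. (x m - x j)))" for w
    unfolding L_def by (simp add: poly_sum poly_prod)
  have degL: "degree L < N"
  proof -
    have "degree L \<le> N - 1" unfolding L_def
    proof (rule degree_sum_le)
      fix m assume m: "m \<in> {..<N}"
      have "degree (\<Prod>j\<in>{..<N}-{m}. [:-x j, 1:]) \<le> (\<Sum>j\<in>{..<N}-{m}. degree [:-x j, 1:])"
        using degree_prod_sum_le[of "{..<N}-{m}" "\<lambda>j. [:-x j, 1:]"] by (simp add: o_def)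
      also have "\<dots> = N - 1" using m by simp
      finally show "degree (Polynomial.smult (poly h (x m) / (\<Prod>j\<in>{..<N}-{m}. (x m - x j))) (\<Prod>j\<in>{..<N}-{m}. [:-x j, 1:])) \<le> N - 1"
        by (rule order_trans[OF degree_smult_le])
    qed auto
    thus ?thesis using deg by linarith
  qed
  have agree: "poly L (x k) = poly h (x k)" if k: "k < N" for k
  proof -
    define F where "F m = poly h (x m) * (\<Prod>j\<in>{..<N}-{m}. (x k - x j)) / (\<Prod>j\<in>{..<N}-{m}. (x m - x j))" for m
    have 1: "poly L (x k) = sum F {..<N}" unfolding F_def by (rule polyL)
    have 2: "sum F {..<N} = F k + sum F ({..<N} - {k})" 
      by (rule sum.remove) (use k in auto)
    have 3: "sum F ({..<N} - {k}) = 0"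
    proof (rule sum.neutral, rule ballI)
      fix m assume m: "m \<in> {..<N} - {k}"
      have "k \<in> {..<N}-{m}" "x k - x k = 0" using m k by auto
      hence "(\<Prod>j\<in>{..<N}-{m}. (x k - x j)) = 0"
        by (intro prod_zero) blast+
      thus "F m = 0" unfolding F_def by simp
    qed
    have "x k - x j \<noteq> 0" if "j \<in> {..<N}-{k}" for j
      using that k inj unfolding inj_on_def by force
    hence nz: "(\<Prod>j\<in>{..<N}-{k}. (x k - x j)) \<noteq> 0"
      by (subst prod_zero_iff) auto
    hence 4: "F k = poly h (x k)" unfolding F_def by simp
    show ?thesis using 1 2 3 4 by simp
  qed
  have "L = h"
  proof (rule poly_eqI_degree[where A="x ` {..<N}"])
    show "poly L y = poly h y" if "y \<in> x ` {..<N}" for y using that agree by auto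
    have "card (x ` {..<N}) = N" using inj by (simp add: card_image)
    thus "degree L < card (x ` {..<N})" "degree h < card (x ` {..<N})" using degL deg by auto
  qed
  hence "poly h w = poly L w" by simp
  thus ?thesis using polyL[of w] by (rule trans)
qed


lemma deg_lin_prod:
  assumes "m < N"
  shows "degree (\<Prod>j\<in>{..<N}-{m}. [:-(x::nat\<Rightarrow>complex) j, 1:]) < N"
proof -
  have "degree (\<Prod>j\<in>{..<N}-{m}. [:-x j, 1:]) \<le> (\<Sum>j\<in>{..<N}-{m}. degree [:-x j, 1:])"
    using degree_prod_sum_le[of "{..<N}-{m}" "\<lambda>j. [:-x j, 1:]"] by (simp add: o_def)
  also have "\<dots> = N - 1" using assms by simp
  finally show ?thesis using assms by linarith
qed

lemma poly_lin_prod: "poly (\<Prod>j\<in>A. [:-(x::nat\<Rightarrow>complex) j, 1:]) w = (\<Prod>j\<in>A. (w - x j))"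
  by (simp add: poly_prod)

lemma prod_remove_nat:
  fixes f :: "nat \<Rightarrow> complex"
  assumes "n < N"
  shows "(\<Prod>j<N. f j) = f n * (\<Prod>j\<in>{..<N}-{n}. f j)"
  using assms by (subst prod.remove[of _ n]) auto

lemma prod_nz_inj:
  fixes x :: "nat \<Rightarrow> complex"
  assumes "inj_on x {..<N}" "m < N"
  shows "(\<Prod>j\<in>{..<N}-{m}. (x m - x j)) \<noteq> 0"
proof -
  have "x m - x j \<noteq> 0" if "j \<in> {..<N}-{m}" for j
    using that assms unfolding inj_on_def by force
  thus ?thesis by (subst prod_zero_iff) auto
qed

lemma eq_at_0:
  fixes f g :: "complex \<Rightarrow> complex"
  assumes "isCont f 0" "isCont g 0" "\<And>t. t \<noteq> 0 \<Longrightarrow> f t = g t"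
  shows "f 0 = g 0"
proof -
  have 1: "(f \<longlongrightarrow> f 0) (at 0)" using assms(1) isCont_def by blast
  have "(g \<longlongrightarrow> g 0) (at 0)" using assms(2) isCont_def by blast
  moreover have "eventually (\<lambda>t. g t = f t) (at 0)" 
    using assms(3) by (auto simp: eventually_at intro!: exI[of _ 1])
  ultimately have 2: "(f \<longlongrightarrow> g 0) (at 0)" using tendsto_cong by blast
  show ?thesis using at_neq_bot 1 2 by (rule tendsto_unique)
qed

lemma cauchy_sum:
  fixes x y :: "nat \<Rightarrow> complex"
  assumes injx: "inj_on x {..<N}" and injy: "inj_on y {..<N}"
    and xy: "\<And>m n. m < N \<Longrightarrow> n < N \<Longrightarrow> x m \<noteq> y n"
    and m: "m < N" and k: "k < N"
  shows "(\<Sum>n<N. ((\<Prod>i<N. (x m - y i)) / (\<Prod>j\<in>{..<N}-{m}. (x m - x j)))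
            * ((\<Prod>j<N. (y n - x j)) / (\<Prod>i\<in>{..<N}-{n}. (y n - y i))) / (y n - x m) / (x k - y n))
         = (if m = k then 1 else 0)"
proof -
  define h where "h = (\<Prod>j\<in>{..<N}-{m}. [:-x j, 1:])"
  have degh: "degree h < N" unfolding h_def using m by (rule deg_lin_prod)
  have ph: "poly h w = (\<Prod>j\<in>{..<N}-{m}. (w - x j))" for w unfolding h_def by (rule poly_lin_prod)
  define Am where "Am = (\<Prod>i<N. (x m - y i)) / (\<Prod>j\<in>{..<N}-{m}. (x m - x j))"
  define Pk where "Pk = (\<Prod>i<N. (x k - y i))"
  have Pk0: "Pk \<noteq> 0" unfolding Pk_def using xy k by (subst prod_zero_iff) auto
  have lag: "poly h (x k) = (\<Sum>n<N. poly h (y n) * (\<Prod>i\<in>{..<N}-{n}. (x k - y i)) / (\<Prod>i\<in>{..<N}-{n}. (y n - y i)))"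
    by (rule lagrange[OF injy degh])
  have trm: "Am * ((\<Prod>j<N. (y n - x j)) / (\<Prod>i\<in>{..<N}-{n}. (y n - y i))) / (y n - x m) / (x k - y n)
      = (Am / Pk) * (poly h (y n) * (\<Prod>i\<in>{..<N}-{n}. (x k - y i)) / (\<Prod>i\<in>{..<N}-{n}. (y n - y i)))"
    if n: "n < N" for n
  proof -
    have e1: "(\<Prod>j<N. (y n - x j)) = (y n - x m) * poly h (y n)"
      unfolding ph using m by (rule prod_remove_nat)
    have e2: "Pk = (x k - y n) * (\<Prod>i\<in>{..<N}-{n}. (x k - y i))"
      unfolding Pk_def using n by (rule prod_remove_nat)
    have n1: "y n - x m \<noteq> 0" "x k - y n \<noteq> 0" using xy m k n by (metis eq_iff_diff_eq_0)+
    have n2: "(\<Prod>i\<in>{..<N}-{n}. (y n - y i)) \<noteq> 0" using injy n by (rule prod_nz_inj)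
    have n3: "(\<Prod>i\<in>{..<N}-{n}. (x k - y i)) \<noteq> 0" using Pk0 e2 by auto
    have aux: "A * (u * p / Q) / u / v = A / (v * P) * (p * P / Q)"
      if "u \<noteq> 0" "v \<noteq> 0" "Q \<noteq> 0" "P \<noteq> 0" for A u p Q v P :: complex
      using that by (simp add: field_simps)
    show ?thesis unfolding e1 e2 using n1 n2 n3 by (rule aux)
  qed
  have "(\<Sum>n<N. Am * ((\<Prod>j<N. (y n - x j)) / (\<Prod>i\<in>{..<N}-{n}. (y n - y i))) / (y n - x m) / (x k - y n))
      = (\<Sum>n<N. (Am / Pk) * (poly h (y n) * (\<Prod>i\<in>{..<N}-{n}. (x k - y i)) / (\<Prod>i\<in>{..<N}-{n}. (y n - y i))))"
    by (rule sum.cong[OF refl], rule trm, simp)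
  also have "\<dots> = (Am / Pk) * poly h (x k)" unfolding lag by (simp add: sum_distrib_left)
  also have "\<dots> = (if m = k then 1 else 0)"
  proof (cases "m = k")
    case True
    have "(\<Prod>j\<in>{..<N}-{m}. (x m - x j)) \<noteq> 0" using injx m by (rule prod_nz_inj)
    thus ?thesis using True Pk0 unfolding Am_def Pk_def ph by simp
  next
    case False
    have "poly h (x k) = 0" unfolding ph using False k by (intro prod_zero) auto
    thus ?thesis using False by simp
  qed
  finally show ?thesis unfolding Am_def .
qed

lemma core:
  fixes x y :: "nat \<Rightarrow> complex"
  assumes injx: "inj_on x {..<N}" and n: "n < N" and t: "t \<noteq> 0"
  shows "(\<Sum>m<N. (\<Prod>j\<in>{..<N}-{n}. (x m - y j)) * (\<Prod>j\<in>{..<N}-{m}. (t * x j + K))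
            / (\<Prod>j\<in>{..<N}-{m}. (x m - x j))) = (\<Prod>j\<in>{..<N}-{n}. (K + t * y j))"
proof -
  define w0 where "w0 = - K / t"
  define h where "h = (\<Prod>j\<in>{..<N}-{n}. [:-y j, 1:])"
  have degh: "degree h < N" unfolding h_def using n by (rule deg_lin_prod)
  have ph: "poly h w = (\<Prod>j\<in>{..<N}-{n}. (w - y j))" for w unfolding h_def by (rule poly_lin_prod)
  have lag: "poly h w0 = (\<Sum>m<N. poly h (x m) * (\<Prod>j\<in>{..<N}-{m}. (w0 - x j)) / (\<Prod>j\<in>{..<N}-{m}. (x m - x j)))"
    by (rule lagrange[OF injx degh])
  have tw: "- t * w0 = K" unfolding w0_def using t by simp
  have pm: "(\<Prod>j\<in>{..<N}-{m}. (t * x j + K)) = (-t) ^ (N - 1) * (\<Prod>j\<in>{..<N}-{m}. (w0 - x j))"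
    if "m < N" for m
  proof -
    have "(\<Prod>j\<in>{..<N}-{m}. (t * x j + K)) = (\<Prod>j\<in>{..<N}-{m}. (-t) * (w0 - x j))"
      by (rule prod.cong) (auto simp: tw[symmetric] algebra_simps)
    also have "\<dots> = (\<Prod>j\<in>{..<N}-{m}. (-t)) * (\<Prod>j\<in>{..<N}-{m}. (w0 - x j))"
      by (rule prod.distrib)
    also have "(\<Prod>j\<in>{..<N}-{m}. (-t)) = (-t) ^ (N - 1)"
      using that by (simp add: card_Diff_singleton)
    finally show ?thesis .
  qed
  have pn: "(\<Prod>j\<in>{..<N}-{n}. (K + t * y j)) = (-t) ^ (N - 1) * poly h w0"
  proof -
    have "(\<Prod>j\<in>{..<N}-{n}. (K + t * y j)) = (\<Prod>j\<in>{..<N}-{n}. (-t) * (w0 - y j))"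
      by (rule prod.cong) (auto simp: tw[symmetric] algebra_simps)
    also have "\<dots> = (\<Prod>j\<in>{..<N}-{n}. (-t)) * (\<Prod>j\<in>{..<N}-{n}. (w0 - y j))"
      by (rule prod.distrib)
    also have "(\<Prod>j\<in>{..<N}-{n}. (-t)) = (-t) ^ (N - 1)"
      using n by (simp add: card_Diff_singleton)
    also have "(\<Prod>j\<in>{..<N}-{n}. (w0 - y j)) = poly h w0" by (simp add: ph)
    finally show ?thesis .
  qed
  have "(\<Sum>m<N. (\<Prod>j\<in>{..<N}-{n}. (x m - y j)) * (\<Prod>j\<in>{..<N}-{m}. (t * x j + K))
            / (\<Prod>j\<in>{..<N}-{m}. (x m - x j)))
      = (\<Sum>m<N. (-t) ^ (N - 1) * (poly h (x m) * (\<Prod>j\<in>{..<N}-{m}. (w0 - x j)) / (\<Prod>j\<in>{..<N}-{m}. (x m - x j))))"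
    by (rule sum.cong) (auto simp: pm ph prod_nz_inj[OF injx])
  also have "\<dots> = (-t) ^ (N - 1) * poly h w0" unfolding lag by (simp add: sum_distrib_left)
  finally show ?thesis using pn by simp
qed

lemma core_all:
  fixes x y :: "nat \<Rightarrow> complex"
  assumes injx: "inj_on x {..<N}" and n: "n < N"
  shows "(\<Sum>m<N. (\<Prod>j\<in>{..<N}-{n}. (x m - y j)) * (\<Prod>j\<in>{..<N}-{m}. (t * x j + K))
            / (\<Prod>j\<in>{..<N}-{m}. (x m - x j))) = (\<Prod>j\<in>{..<N}-{n}. (K + t * y j))"
proof (cases "t = 0")
  case False thus ?thesis using core[OF injx n] by blast
next
  case True
  define f where "f t = (\<Sum>m<N. (\<Prod>j\<in>{..<N}-{n}. (x m - y j)) * (\<Prod>j\<in>{..<N}-{m}. (t * x j + K))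
            / (\<Prod>j\<in>{..<N}-{m}. (x m - x j)))" for t
  define g where "g t = (\<Prod>j\<in>{..<N}-{n}. (K + t * y j))" for t
  have "f 0 = g 0"
  proof (rule eq_at_0)
    show "isCont f 0" unfolding f_def
      by (intro continuous_intros) (auto dest: inj_onD[OF injx])
    show "isCont g 0" unfolding g_def by (intro continuous_intros)
    show "f t = g t" if "t \<noteq> 0" for t unfolding f_def g_def using core[OF injx n that] by blast
  qed
  thus ?thesis using True unfolding f_def g_def by simp
qed


lemma powi_cancel:
  fixes a :: complex
  assumes "a \<noteq> 0" "N \<ge> 1"
  shows "a powi (1 - int N) * a ^ (N - 1) = 1"
proof -
  have e: "1 - int N = - int (N - 1)" using assms by simp
  have "a powi (1 - int N) = inverse (a powi int (N - 1))" unfolding e by (rule power_int_minus)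
  also have "a powi int (N - 1) = a ^ (N - 1)" by (rule power_int_of_nat)
  finally show ?thesis using assms by (simp add: field_simps)
qed

lemma KI:
  fixes z z' :: "nat \<Rightarrow> complex" and a b \<eta> \<beta> :: complex
  assumes N: "N \<ge> 1" and inj': "inj_on z' {..<N}"
    and d1: "\<And>j. j < N \<Longrightarrow> \<eta> * z j + \<beta> \<noteq> 0"
    and d1': "\<And>j. j < N \<Longrightarrow> \<eta> * z' j + \<beta> \<noteq> 0"
    and d2: "\<And>m n. m < N \<Longrightarrow> n < N \<Longrightarrow> z' m - a * z n - b \<noteq> 0"
    and a0: "a \<noteq> 0" and n: "n < N"
  shows "(\<Sum>m<N. ghat N a b \<eta> \<beta> z z' m / (z' m - a * z n - b) * (1 / (\<eta> * z' m + \<beta>)))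
         = 1 / (\<eta> * z n + \<beta>)"
proof -
  define y where "y j = a * z j + b" for j
  define K where "K = a * \<beta> - b * \<eta>"
  define P0 where "P0 = (\<Prod>j<N. (\<eta> * z j + \<beta>))"
  define Pn where "Pn = (\<Prod>j\<in>{..<N}-{n}. (\<eta> * z j + \<beta>))"
  define c where "c = a powi (1 - int N)"
  have P0n: "P0 = (\<eta> * z n + \<beta>) * Pn" unfolding P0_def Pn_def using n by (rule prod_remove_nat)
  have Pn0: "Pn \<noteq> 0" unfolding Pn_def using d1 by (subst prod_zero_iff) auto
  have aux: "c * e * (u * Q / P0) * (R / D) / u * (1 / e) = c / P0 * (Q * R / D)"
    if "u \<noteq> 0" "e \<noteq> 0" for e u Q R D :: complex
    using that by (simp add: field_simps)
  have trm: "ghat N a b \<eta> \<beta> z z' m / (z' m - a * z n - b) * (1 / (\<eta> * z' m + \<beta>))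
     = c / P0 * ((\<Prod>j\<in>{..<N}-{n}. (z' m - y j)) * (\<Prod>j\<in>{..<N}-{m}. (\<eta> * z' j + K))
            / (\<Prod>j\<in>{..<N}-{m}. (z' m - z' j)))" if m: "m < N" for m
  proof -
    have e1: "(\<Prod>j<N. (z' m - a * z j - b) / (\<eta> * z j + \<beta>)) = 
       (z' m - a * z n - b) * (\<Prod>j\<in>{..<N}-{n}. (z' m - y j)) / P0"
    proof -
      have "(\<Prod>j<N. (z' m - a * z j - b) / (\<eta> * z j + \<beta>)) = (\<Prod>j<N. (z' m - a * z j - b)) / P0"
        unfolding P0_def by (rule prod_dividef)
      also have "(\<Prod>j<N. (z' m - a * z j - b)) = (z' m - a * z n - b) * (\<Prod>j\<in>{..<N}-{n}. (z' m - a * z j - b))"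
        using n by (rule prod_remove_nat)
      also have "(\<Prod>j\<in>{..<N}-{n}. (z' m - a * z j - b)) = (\<Prod>j\<in>{..<N}-{n}. (z' m - y j))"
        unfolding y_def by (rule prod.cong) (auto simp: algebra_simps)
      finally show ?thesis .
    qed
    have e2: "(\<Prod>j\<in>{..<N}-{m}. (\<eta> * z' j + a * \<beta> - b * \<eta>) / (z' m - z' j)) =
        (\<Prod>j\<in>{..<N}-{m}. (\<eta> * z' j + K)) / (\<Prod>j\<in>{..<N}-{m}. (z' m - z' j))"
    proof -
      have "(\<Prod>j\<in>{..<N}-{m}. (\<eta> * z' j + a * \<beta> - b * \<eta>) / (z' m - z' j)) =
        (\<Prod>j\<in>{..<N}-{m}. (\<eta> * z' j + a * \<beta> - b * \<eta>)) / (\<Prod>j\<in>{..<N}-{m}. (z' m - z' j))"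
        by (rule prod_dividef)
      also have "(\<Prod>j\<in>{..<N}-{m}. (\<eta> * z' j + a * \<beta> - b * \<eta>)) = (\<Prod>j\<in>{..<N}-{m}. (\<eta> * z' j + K))"
        unfolding K_def by (rule prod.cong) (auto simp: algebra_simps)
      finally show ?thesis .
    qed
    have "ghat N a b \<eta> \<beta> z z' m = c * (\<eta> * z' m + \<beta>) * ((z' m - a * z n - b) * (\<Prod>j\<in>{..<N}-{n}. (z' m - y j)) / P0)
       * ((\<Prod>j\<in>{..<N}-{m}. (\<eta> * z' j + K)) / (\<Prod>j\<in>{..<N}-{m}. (z' m - z' j)))"
      unfolding ghat_def c_def e1 e2 by (rule refl)
    thus ?thesis by (simp only:) (rule aux[OF d2[OF m n] d1'[OF m]])
  qed
  have "(\<Sum>m<N. ghat N a b \<eta> \<beta> z z' m / (z' m - a * z n - b) * (1 / (\<eta> * z' m + \<beta>)))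
      = (\<Sum>m<N. c / P0 * ((\<Prod>j\<in>{..<N}-{n}. (z' m - y j)) * (\<Prod>j\<in>{..<N}-{m}. (\<eta> * z' j + K))
            / (\<Prod>j\<in>{..<N}-{m}. (z' m - z' j))))"
    by (rule sum.cong[OF refl], rule trm, simp)
  also have "\<dots> = c / P0 * (\<Prod>j\<in>{..<N}-{n}. (K + \<eta> * y j))"
    unfolding core_all[OF inj' n, of y \<eta> K, symmetric] by (simp add: sum_distrib_left)
  also have "(\<Prod>j\<in>{..<N}-{n}. (K + \<eta> * y j)) = (\<Prod>j\<in>{..<N}-{n}. a * (\<eta> * z j + \<beta>))"
    unfolding K_def y_def by (rule prod.cong) (auto simp: algebra_simps)
  also have "\<dots> = (\<Prod>j\<in>{..<N}-{n}. a) * Pn" unfolding Pn_def by (rule prod.distrib)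
  also have "(\<Prod>j\<in>{..<N}-{n}. a) = a ^ (N - 1)" using n by (simp add: card_Diff_singleton)
  also have "c / P0 * (a ^ (N - 1) * Pn) = (c * a ^ (N - 1)) / (\<eta> * z n + \<beta>) * (Pn / Pn)"
    unfolding P0n by simp
  also have "\<dots> = 1 / (\<eta> * z n + \<beta>)" unfolding c_def using powi_cancel[OF a0 N] Pn0 by simp
  finally show ?thesis .
qed




lemma mult_entry:
  fixes A B :: "complex mat"
  assumes "A \<in> carrier_mat n n" "B \<in> carrier_mat n n" "i < n" "j < n"
  shows "(A * B) $$ (i,j) = (\<Sum>k<n. A $$ (i,k) * B $$ (k,j))"
  using assms by (simp add: scalar_prod_def atLeast0LessThan)

lemma prod_foldr_carrier:
  fixes Ms :: "complex mat list"
  assumes "\<forall>M\<in>set Ms. M \<in> carrier_mat n n" "X \<in> carrier_mat n n"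
  shows "foldr (*) Ms X \<in> carrier_mat n n"
  using assms by (induction Ms) auto

lemma prod_foldr_gen:
  fixes Ms :: "complex mat list"
  assumes "\<forall>M\<in>set Ms. M \<in> carrier_mat n n" "X \<in> carrier_mat n n"
  shows "foldr (*) Ms X = foldr (*) Ms (1\<^sub>m n) * X"
  using assms
proof (induction Ms)
  case Nil thus ?case by simp
next
  case (Cons M Ms)
  have c: "foldr (*) Ms (1\<^sub>m n) \<in> carrier_mat n n" using Cons.prems by (intro prod_foldr_carrier) auto
  have "foldr (*) (M # Ms) X = M * (foldr (*) Ms (1\<^sub>m n) * X)" using Cons by simp
  also have "\<dots> = (M * foldr (*) Ms (1\<^sub>m n)) * X" using Cons.prems c by (subst assoc_mult_mat) auto
  finally show ?case by simp
qed

lemma mat_prod_list_carrier: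
  assumes "\<forall>M\<in>set Ms. M \<in> carrier_mat n n"
  shows "mat_prod_list n Ms \<in> carrier_mat n n"
  unfolding mat_prod_list_def using assms by (intro prod_foldr_carrier) auto

lemma mat_prod_list_snoc:
  fixes Ms :: "complex mat list"
  assumes "\<forall>M\<in>set Ms. M \<in> carrier_mat n n" "M \<in> carrier_mat n n"
  shows "mat_prod_list n (Ms @ [M]) = mat_prod_list n Ms * M"
  unfolding mat_prod_list_def using assms by (simp add: prod_foldr_gen[symmetric])

lemma sum_foldr_carrier:
  fixes Ms :: "complex mat list"
  assumes "\<forall>M\<in>set Ms. M \<in> carrier_mat n n" "X \<in> carrier_mat n n"
  shows "foldr (+) Ms X \<in> carrier_mat n n"
  using assms by (induction Ms) auto

lemma sum_foldr_gen:
  fixes Ms :: "complex mat list"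
  assumes "\<forall>M\<in>set Ms. M \<in> carrier_mat n n" "X \<in> carrier_mat n n"
  shows "foldr (+) Ms X = foldr (+) Ms (0\<^sub>m n n) + X"
  using assms
proof (induction Ms)
  case Nil thus ?case by simp
next
  case (Cons M Ms)
  have c: "foldr (+) Ms (0\<^sub>m n n) \<in> carrier_mat n n" using Cons.prems by (intro sum_foldr_carrier) auto
  have "foldr (+) (M # Ms) X = M + (foldr (+) Ms (0\<^sub>m n n) + X)" using Cons by simp
  also have "\<dots> = (M + foldr (+) Ms (0\<^sub>m n n)) + X" using Cons.prems c by (subst assoc_add_mat) auto
  finally show ?case by simp
qed

lemma mat_sum_list_carrier:
  assumes "\<forall>M\<in>set Ms. M \<in> carrier_mat n n"
  shows "mat_sum_list n Ms \<in> carrier_mat n n"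
  unfolding mat_sum_list_def using assms by (intro sum_foldr_carrier) auto

lemma mat_sum_list_snoc:
  fixes Ms :: "complex mat list"
  assumes "\<forall>M\<in>set Ms. M \<in> carrier_mat n n" "M \<in> carrier_mat n n"
  shows "mat_sum_list n (Ms @ [M]) = mat_sum_list n Ms + M"
  unfolding mat_sum_list_def using assms by (simp add: sum_foldr_gen[symmetric])

lemma mat_sum_list_mult:
  fixes Ms :: "complex mat list"
  assumes "\<forall>M\<in>set Ms. M \<in> carrier_mat n n" "F \<in> carrier_mat n n"
  shows "mat_sum_list n (map (\<lambda>M. M * F) Ms) = mat_sum_list n Ms * F"
  using assms
proof (induction Ms)
  case Nil thus ?case unfolding mat_sum_list_def by simp
next
  case (Cons M Ms)
  have c: "mat_sum_list n Ms \<in> carrier_mat n n" using Cons.prems by (intro mat_sum_list_carrier) auto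
  have "mat_sum_list n (map (\<lambda>M. M * F) (M # Ms)) = M * F + mat_sum_list n Ms * F"
    using Cons by (simp add: mat_sum_list_def)
  also have "\<dots> = (M + mat_sum_list n Ms) * F" using Cons.prems c by (subst add_mult_distrib_mat) auto
  finally show ?case by (simp add: mat_sum_list_def)
qed

lemma U_rec:
  fixes A B U0 :: "complex mat" and U :: "nat \<Rightarrow> complex mat"
  assumes cA: "A \<in> carrier_mat N N" and cB: "B \<in> carrier_mat N N" and cU0: "U0 \<in> carrier_mat N N"
    and U_def: "\<And>l. U l =
        U0 * mat_prod_list N (map (\<lambda>j. \<gamma> ^ j \<cdot>\<^sub>m A + a \<cdot>\<^sub>m 1\<^sub>m N) [0..<l])
        + mat_sum_list N (map (\<lambda>k. (\<gamma> ^ (k - 1) \<cdot>\<^sub>m B + b \<cdot>\<^sub>m 1\<^sub>m N)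
             * mat_prod_list N (map (\<lambda>j. \<gamma> ^ j \<cdot>\<^sub>m A + a \<cdot>\<^sub>m 1\<^sub>m N) [k..<l])) [1..<Suc l])"
  shows "U (Suc l) = U l * (\<gamma> ^ l \<cdot>\<^sub>m A + a \<cdot>\<^sub>m 1\<^sub>m N) + (\<gamma> ^ l \<cdot>\<^sub>m B + b \<cdot>\<^sub>m 1\<^sub>m N)"
    and "U l \<in> carrier_mat N N"
proof -
  define f where "f j = \<gamma> ^ j \<cdot>\<^sub>m A + a \<cdot>\<^sub>m 1\<^sub>m N" for j
  define G where "G k = \<gamma> ^ (k - 1) \<cdot>\<^sub>m B + b \<cdot>\<^sub>m 1\<^sub>m N" for k
  define PL where "PL k l = mat_prod_list N (map f [k..<l])" for k l
  define SL where "SL l = mat_sum_list N (map (\<lambda>k. G k * PL k l) [1..<Suc l])" for l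
  have cf: "f j \<in> carrier_mat N N" for j unfolding f_def using cA by auto
  have cG: "G j \<in> carrier_mat N N" for j unfolding G_def using cB by auto
  have cPL: "PL k l \<in> carrier_mat N N" for k l unfolding PL_def using cf by (intro mat_prod_list_carrier) auto
  have cSL: "SL l \<in> carrier_mat N N" for l unfolding SL_def using cG cPL by (intro mat_sum_list_carrier) (auto intro: mult_carrier_mat)
  have Ul: "U l = U0 * PL 0 l + SL l" for l unfolding U_def PL_def SL_def f_def G_def by simp
  show "U l \<in> carrier_mat N N" unfolding Ul using cU0 cPL cSL by auto
  have PLs: "PL k (Suc l) = PL k l * f l" if "k \<le> l" for k
    unfolding PL_def using that cf by (simp add: mat_prod_list_snoc)
  have PLe: "PL (Suc l) (Suc l) = 1\<^sub>m N" unfolding PL_def mat_prod_list_def by simp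
  have mapeq: "map (\<lambda>k. G k * PL k (Suc l)) [1..<Suc l] = map (\<lambda>M. M * f l) (map (\<lambda>k. G k * PL k l) [1..<Suc l])"
    unfolding map_map o_def
  proof (rule map_cong[OF refl])
    fix k assume "k \<in> set [1..<Suc l]"
    hence kl: "k \<le> l" by auto
    show "G k * PL k (Suc l) = G k * PL k l * f l"
      unfolding PLs[OF kl] using assoc_mult_mat[OF cG cPL cf] by simp
  qed
  have upt: "[1..<Suc (Suc l)] = [1..<Suc l] @ [Suc l]" by simp
  have cms: "\<forall>M\<in>set (map (\<lambda>k. G k * PL k l) [1..<Suc l]). M \<in> carrier_mat N N"
    using cG cPL by (auto intro: mult_carrier_mat)
  have cms2: "\<forall>M\<in>set (map (\<lambda>k. G k * PL k (Suc l)) [1..<Suc l]). M \<in> carrier_mat N N"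
    using cG cPL by (auto intro: mult_carrier_mat)
  have "SL (Suc l) = mat_sum_list N (map (\<lambda>k. G k * PL k (Suc l)) [1..<Suc l] @ [G (Suc l) * PL (Suc l) (Suc l)])"
    unfolding SL_def upt by simp
  also have "\<dots> = mat_sum_list N (map (\<lambda>k. G k * PL k (Suc l)) [1..<Suc l]) + G (Suc l) * PL (Suc l) (Suc l)"
    by (rule mat_sum_list_snoc[OF cms2]) (use cG cPL in \<open>auto intro: mult_carrier_mat\<close>)
  also have "mat_sum_list N (map (\<lambda>k. G k * PL k (Suc l)) [1..<Suc l]) = SL l * f l"
    unfolding mapeq SL_def by (rule mat_sum_list_mult[OF cms cf])
  also have "G (Suc l) * PL (Suc l) (Suc l) = G (Suc l)" unfolding PLe by (rule right_mult_one_mat[OF cG])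
  finally have SLs: "SL (Suc l) = SL l * f l + G (Suc l)" .
  have "U (Suc l) = U0 * (PL 0 l * f l) + (SL l * f l + G (Suc l))" unfolding Ul SLs PLs[OF le0] ..
  also have "\<dots> = (U0 * PL 0 l + SL l) * f l + G (Suc l)"
  proof -
    have c1: "U0 * (PL 0 l * f l) \<in> carrier_mat N N" "SL l * f l \<in> carrier_mat N N"
      "U0 * PL 0 l \<in> carrier_mat N N" "G (Suc l) \<in> carrier_mat N N"
      using cU0 cPL cSL cf cG by (auto intro!: mult_carrier_mat)
    have "(U0 * PL 0 l + SL l) * f l = U0 * PL 0 l * f l + SL l * f l"
      by (rule add_mult_distrib_mat) (use c1 cSL cf in auto)
    also have "U0 * PL 0 l * f l = U0 * (PL 0 l * f l)" by (rule assoc_mult_mat) (use cU0 cPL cf in auto)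
    finally have "(U0 * PL 0 l + SL l) * f l + G (Suc l) = (U0 * (PL 0 l * f l) + SL l * f l) + G (Suc l)" by simp
    also have "\<dots> = U0 * (PL 0 l * f l) + (SL l * f l + G (Suc l))" by (rule assoc_add_mat) (use c1 in auto)
    finally show ?thesis by simp
  qed
  finally show "U (Suc l) = U l * (\<gamma> ^ l \<cdot>\<^sub>m A + a \<cdot>\<^sub>m 1\<^sub>m N) + (\<gamma> ^ l \<cdot>\<^sub>m B + b \<cdot>\<^sub>m 1\<^sub>m N)"
    unfolding Ul f_def G_def by simp
qed


lemma conj_lin:
  fixes R Ri Z G :: "complex mat"
  assumes c: "R \<in> carrier_mat n n" "Ri \<in> carrier_mat n n" "Z \<in> carrier_mat n n" "G \<in> carrier_mat n n"
    and RRi: "R * Ri = 1\<^sub>m n"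
  shows "R * (a \<cdot>\<^sub>m Z + b \<cdot>\<^sub>m 1\<^sub>m n + c \<cdot>\<^sub>m G) * Ri = a \<cdot>\<^sub>m (R * Z * Ri) + b \<cdot>\<^sub>m 1\<^sub>m n + c \<cdot>\<^sub>m (R * G * Ri)"
proof -
  have "R * (a \<cdot>\<^sub>m Z + b \<cdot>\<^sub>m 1\<^sub>m n + c \<cdot>\<^sub>m G) = R * (a \<cdot>\<^sub>m Z) + R * (b \<cdot>\<^sub>m 1\<^sub>m n) + R * (c \<cdot>\<^sub>m G)"
    using c by (simp add: mult_add_distrib_mat[of _ n n _ n])
  also have "\<dots> = a \<cdot>\<^sub>m (R * Z) + b \<cdot>\<^sub>m R + c \<cdot>\<^sub>m (R * G)"
    using c by (simp add: mult_smult_distrib[of _ n n _ n])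
  finally have 1: "R * (a \<cdot>\<^sub>m Z + b \<cdot>\<^sub>m 1\<^sub>m n + c \<cdot>\<^sub>m G) = a \<cdot>\<^sub>m (R * Z) + b \<cdot>\<^sub>m R + c \<cdot>\<^sub>m (R * G)" .
  have "(a \<cdot>\<^sub>m (R * Z) + b \<cdot>\<^sub>m R + c \<cdot>\<^sub>m (R * G)) * Ri = 
      (a \<cdot>\<^sub>m (R * Z)) * Ri + (b \<cdot>\<^sub>m R) * Ri + (c \<cdot>\<^sub>m (R * G)) * Ri"
    using c by (simp add: add_mult_distrib_mat[of _ n n _ _ n])
  also have "\<dots> = a \<cdot>\<^sub>m (R * Z * Ri) + b \<cdot>\<^sub>m (R * Ri) + c \<cdot>\<^sub>m (R * G * Ri)"
    using c by (simp add: mult_smult_assoc_mat[of _ n n _ n])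
  finally show ?thesis unfolding 1 RRi .
qed

lemma conj_W:
  fixes R Ri Z W :: "complex mat"
  assumes c: "R \<in> carrier_mat n n" "Ri \<in> carrier_mat n n" "Z \<in> carrier_mat n n" "W \<in> carrier_mat n n"
    and RRi: "R * Ri = 1\<^sub>m n"
  shows "(\<eta> \<cdot>\<^sub>m (R * Z * Ri) + \<beta> \<cdot>\<^sub>m 1\<^sub>m n) * W = R * ((\<eta> \<cdot>\<^sub>m Z + \<beta> \<cdot>\<^sub>m 1\<^sub>m n) * (Ri * W * R)) * Ri"
proof -
  define E where "E = \<eta> \<cdot>\<^sub>m Z + \<beta> \<cdot>\<^sub>m 1\<^sub>m n"
  have cE: "E \<in> carrier_mat n n" unfolding E_def using c by simp
  have "R * E = \<eta> \<cdot>\<^sub>m (R * Z) + \<beta> \<cdot>\<^sub>m R"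
    unfolding E_def using c by (simp add: mult_add_distrib_mat[of _ n n _ n] mult_smult_distrib[of _ n n _ n])
  hence "R * E * Ri = (\<eta> \<cdot>\<^sub>m (R * Z) + \<beta> \<cdot>\<^sub>m R) * Ri" by simp
  also have "\<dots> = \<eta> \<cdot>\<^sub>m (R * Z * Ri) + \<beta> \<cdot>\<^sub>m (R * Ri)"
    using c by (simp add: add_mult_distrib_mat[of _ n n _ _ n] mult_smult_assoc_mat[of _ n n _ n])
  also have "\<dots> = \<eta> \<cdot>\<^sub>m (R * Z * Ri) + \<beta> \<cdot>\<^sub>m 1\<^sub>m n" unfolding RRi ..
  finally have 1: "R * E * Ri = \<eta> \<cdot>\<^sub>m (R * Z * Ri) + \<beta> \<cdot>\<^sub>m 1\<^sub>m n" .
  have "R * (E * (Ri * W * R)) * Ri = (R * E * Ri) * W * (R * Ri)"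
    using c cE by (simp add: assoc_mult_mat[of _ n n _ n _ n])
  also have "\<dots> = (R * E * Ri) * W" unfolding RRi using c cE by simp
  finally have "R * (E * (Ri * W * R)) * Ri = (\<eta> \<cdot>\<^sub>m (R * Z * Ri) + \<beta> \<cdot>\<^sub>m 1\<^sub>m n) * W"
    by (simp only: 1)
  thus ?thesis unfolding E_def by simp
qed

lemma diag_lin: "a \<cdot>\<^sub>m mat_diag n f + b \<cdot>\<^sub>m 1\<^sub>m n = mat_diag n (\<lambda>i. a * f i + (b::complex))"
  by (rule eq_matI) (auto simp: mat_diag_def)

lemma minv_props:
  fixes A :: "complex mat"
  assumes A: "A \<in> carrier_mat n n" and inv: "invertible_mat A"
  shows "A * minv A = 1\<^sub>m n" "minv A * A = 1\<^sub>m n" "minv A \<in> carrier_mat n n"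
proof -
  obtain B where AB: "A * B = 1\<^sub>m n" and BA: "B * A = 1\<^sub>m (dim_row B)"
    using inv A unfolding invertible_mat_def inverts_mat_def by auto
  have "dim_col B = n" using AB by (metis index_mult_mat(3) index_one_mat(3))
  moreover have "dim_row B = n" using BA A by (metis carrier_matD(2) index_mult_mat(3) index_one_mat(3))
  ultimately have cB: "B \<in> carrier_mat n n" by auto
  have BA': "B * A = 1\<^sub>m n" using BA cB by simp
  have U: "A \<in> Units (ring_mat TYPE(complex) n ())"
    unfolding Units_def using A cB AB BA' by (auto simp: ring_mat_simps)
  obtain C where C: "mat_inverse A = Some C"
  proof (cases "mat_inverse A")
    case None thus ?thesis using mat_inverse(1)[OF A None, of "()"] U by blast
  qed auto
  from mat_inverse(2)[OF A C] have "A * C = 1\<^sub>m n \<and> C * A = 1\<^sub>m n \<and> C \<in> carrier_mat n n" .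
  thus "A * minv A = 1\<^sub>m n" "minv A * A = 1\<^sub>m n" "minv A \<in> carrier_mat n n"
    unfolding minv_def C by auto
qed

lemma minv_unique:
  fixes A T :: "complex mat"
  assumes A: "A \<in> carrier_mat n n" and inv: "invertible_mat A" and T: "T \<in> carrier_mat n n"
    and AT: "A * T = 1\<^sub>m n"
  shows "minv A = T"
proof -
  note m = minv_props[OF A inv]
  have "minv A = minv A * (A * T)" unfolding AT using m by simp
  also have "\<dots> = (minv A * A) * T" by (rule assoc_mult_mat[symmetric]) (use m A T in auto)
  also have "\<dots> = T" unfolding m using T by simp
  finally show ?thesis .
qed

lemma mset_proots_diag:
  fixes f :: "nat \<Rightarrow> complex"
  shows "eigenvalue_mset (mat_diag n f) = mset (map f [0..<n])"
proof -
  have ut: "upper_triangular (mat_diag n f)" unfolding upper_triangular_def mat_diag_def by auto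
  have cp: "char_poly (mat_diag n f) = (\<Prod>a\<leftarrow>diag_mat (mat_diag n f). [:- a, 1:])"
    by (rule char_poly_upper_triangular[OF mat_diag_dim ut])
  have dm: "diag_mat (mat_diag n f) = map f [0..<n]"
    unfolding diag_mat_def mat_diag_def by (simp add: list_eq_iff_nth_eq)
  have pl: "proots (\<Prod>a\<leftarrow>xs. [:- a, 1:]) = mset xs" for xs :: "complex list"
  proof (induction xs)
    case Nil thus ?case by simp
  next
    case (Cons x xs)
    have e: "(\<Prod>a\<leftarrow>x # xs. [:- a, 1:]) = [:- x, 1:] * (\<Prod>a\<leftarrow>xs. [:- a, 1:])" by simp
    have "proots (\<Prod>a\<leftarrow>x # xs. [:- a, 1:]) = proots [:- x, 1:] + proots (\<Prod>a\<leftarrow>xs. [:- a, 1:])"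
      unfolding e by (rule proots_mult) (auto simp: prod_list_zero_iff)
    thus ?case using Cons by simp
  qed
  show ?thesis unfolding eigenvalue_mset_def cp dm by (rule pl)
qed





theorem proposition2p4p1:
  fixes N :: nat and \<alpha> \<beta> \<gamma> \<eta> \<rho> a b :: complex
    and z :: "nat \<Rightarrow> nat \<Rightarrow> complex"
    and M0 U0 V0 A B :: "complex mat"
    and Z :: "nat \<Rightarrow> complex mat"
    and U :: "nat \<Rightarrow> complex mat"
  assumes N: "N \<ge> 1"
    and \<beta>: "\<beta> \<noteq> 0" and \<gamma>0: "\<gamma> \<noteq> 0" and \<gamma>1: "\<gamma> \<noteq> 1"
    and a_def: "a = \<alpha> + \<eta> * \<rho> / (1 - \<gamma>)"
    and b_def: "b = \<beta> * \<rho> / (1 - \<gamma>)"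
    and a0: "a \<noteq> 0"
    \<comment> \<open>genericity\<close>
    and distinct: "\<And>l. inj_on (z l) {..<N}"
    and den1: "\<And>l j. j < N \<Longrightarrow> \<eta> * z l j + \<beta> \<noteq> 0"
    and den2: "\<And>l n k. n < N \<Longrightarrow> k < N \<Longrightarrow> z (Suc l) n - a * z l k - b \<noteq> 0"
    \<comment> \<open>z(l+2) are the N roots of the rational equation\<close>
    and roots: "\<And>l w. (\<forall>k<N. w - a * z (Suc l) k - b \<noteq> 0) \<Longrightarrow>
        ((\<Sum>k<N. ghat N a b \<eta> \<beta> (z l) (z (Suc l)) k / (w - a * z (Suc l) k - b)) = 1 / \<gamma>
         \<longleftrightarrow> (\<exists>n<N. w = z (Suc (Suc l)) n))"
    and Z_def: "\<And>l. Z l = mat_diag N (z l)"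
    and U0_def: "U0 = Z 0"
    and M0_def: "M0 = mat N N (\<lambda>(n, m). ghat N a b \<eta> \<beta> (z 0) (z 1) m / (z 1 m - a * z 0 n - b))"
    and M0_inv: "invertible_mat M0"
    and EZ_inv: "invertible_mat (\<eta> \<cdot>\<^sub>m Z 0 + \<beta> \<cdot>\<^sub>m 1\<^sub>m N)"
    and V0_def: "V0 = minv (\<eta> \<cdot>\<^sub>m Z 0 + \<beta> \<cdot>\<^sub>m 1\<^sub>m N) * (M0 * Z 1 * minv M0 - \<alpha> \<cdot>\<^sub>m Z 0)"
    and A_def: "A = \<eta> \<cdot>\<^sub>m V0 - (\<eta> / \<beta> * b) \<cdot>\<^sub>m 1\<^sub>m N"
    and B_def: "B = \<beta> \<cdot>\<^sub>m V0 - b \<cdot>\<^sub>m 1\<^sub>m N"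
    \<comment> \<open>U l = U0 P(0,l-1) + sum_{k=1}^{l} (B gamma^(k-1) + b I) P(k,l-1), where
        P(l1,l2) = prod_{j=l1}^{l2} (A gamma^j + a I) (identity if l1 > l2); the product
        over j from k to l-1 is written with the exclusive upper bound l\<close>
    and U_def: "\<And>l. U l =
        U0 * mat_prod_list N (map (\<lambda>j. \<gamma> ^ j \<cdot>\<^sub>m A + a \<cdot>\<^sub>m 1\<^sub>m N) [0..<l])
        + mat_sum_list N (map (\<lambda>k. (\<gamma> ^ (k - 1) \<cdot>\<^sub>m B + b \<cdot>\<^sub>m 1\<^sub>m N)
             * mat_prod_list N (map (\<lambda>j. \<gamma> ^ j \<cdot>\<^sub>m A + a \<cdot>\<^sub>m 1\<^sub>m N) [k..<l])) [1..<Suc l])"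
  shows "\<forall>l. mset (map (z l) [0..<N]) = eigenvalue_mset (U l)"
proof -
  have cZ: "\<And>l. Z l \<in> carrier_mat N N" by (simp add: Z_def)
  define gh where "gh l m = ghat N a b \<eta> \<beta> (z l) (z (Suc l)) m" for l m
  define Sm where "Sm l = mat N N (\<lambda>(i,j). gh l j / (z (Suc l) j - a * z l i - b))" for l
  define Am where "Am l m = (\<Prod>i<N. (z (Suc l) m - (a * z l i + b))) / (\<Prod>j\<in>{..<N}-{m}. (z (Suc l) m - z (Suc l) j))" for l m
  define Bm where "Bm l n = (\<Prod>j<N. ((a * z l n + b) - z (Suc l) j)) / (\<Prod>i\<in>{..<N}-{n}. ((a * z l n + b) - (a * z l i + b)))" for l n
  define Tm where "Tm l = mat N N (\<lambda>(m,n). Am l m * Bm l n / ((a * z l n + b) - z (Suc l) m) / gh l m)" for l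
  define Dv where "Dv l = mat_diag N (\<lambda>i. 1 / (\<eta> * z l i + \<beta>))" for l
  define Gr where "Gr l = mat N N (\<lambda>(i,j). gh l j)" for l
  define E where "E l = \<eta> \<cdot>\<^sub>m Z l + \<beta> \<cdot>\<^sub>m 1\<^sub>m N" for l
  define W where "W = V0 - (b / \<beta>) \<cdot>\<^sub>m 1\<^sub>m N"
  have cS: "\<And>l. Sm l \<in> carrier_mat N N" by (simp add: Sm_def)
  have cT: "\<And>l. Tm l \<in> carrier_mat N N" by (simp add: Tm_def)
  have cDv: "\<And>l. Dv l \<in> carrier_mat N N" by (simp add: Dv_def)
  have cGr: "\<And>l. Gr l \<in> carrier_mat N N" by (simp add: Gr_def)
  have cE: "\<And>l. E l \<in> carrier_mat N N" by (simp add: E_def cZ)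
  have dims[simp]: "dim_row (Sm l) = N" "dim_col (Sm l) = N" "dim_row (Tm l) = N" "dim_col (Tm l) = N"
    "dim_row (Dv l) = N" "dim_col (Dv l) = N" "dim_row (Gr l) = N" "dim_col (Gr l) = N"
    "dim_row (E l) = N" "dim_col (E l) = N" "dim_row (Z l) = N" "dim_col (Z l) = N" for l
    by (simp_all add: Sm_def Tm_def Dv_def Gr_def E_def Z_def mat_diag_def)
  have Ediag: "\<And>l. E l = mat_diag N (\<lambda>i. \<eta> * z l i + \<beta>)" unfolding E_def Z_def by (rule diag_lin)

  have sec: "(\<Sum>k<N. gh l k / (z (Suc (Suc l)) j - a * z (Suc l) k - b)) = 1 / \<gamma>" if j: "j < N" for l j
  proof -
    have pre: "\<forall>k<N. z (Suc (Suc l)) j - a * z (Suc l) k - b \<noteq> 0" using den2 j by blast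
    have "\<exists>n<N. z (Suc (Suc l)) j = z (Suc (Suc l)) n" using j by blast
    thus ?thesis using roots[OF pre] unfolding gh_def by blast
  qed

  have gh_nz: "gh l m \<noteq> 0" if m: "m < N" for l m
  proof
    assume g0: "gh l m = 0"
    have f1: "a powi (1 - int N) \<noteq> 0" using a0 by simp
    have f2: "\<eta> * z (Suc l) m + \<beta> \<noteq> 0" using den1 m by blast
    have f3: "(\<Prod>j<N. (z (Suc l) m - a * z l j - b) / (\<eta> * z l j + \<beta>)) \<noteq> 0"
      using den1 den2[OF m] by (subst prod_zero_iff) auto
    have "a powi (1 - int N) * (\<eta> * z (Suc l) m + \<beta>) * (\<Prod>j<N. (z (Suc l) m - a * z l j - b) / (\<eta> * z l j + \<beta>))
       * (\<Prod>j\<in>{..<N}-{m}. (\<eta> * z (Suc l) j + a * \<beta> - b * \<eta>) / (z (Suc l) m - z (Suc l) j)) = 0"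
      using g0 unfolding gh_def ghat_def .
    hence "(\<Prod>j\<in>{..<N}-{m}. (\<eta> * z (Suc l) j + a * \<beta> - b * \<eta>) / (z (Suc l) m - z (Suc l) j)) = 0"
      using f1 f2 f3 by (auto simp only: mult_eq_0_iff)
    then obtain j where j: "j < N" "j \<noteq> m" and jz: "(\<eta> * z (Suc l) j + a * \<beta> - b * \<eta>) / (z (Suc l) m - z (Suc l) j) = 0"
      by (subst (asm) prod_zero_iff) auto
    have "z (Suc l) m \<noteq> z (Suc l) j" using distinct[of "Suc l"] j m unfolding inj_on_def by blast
    hence K0: "\<eta> * z (Suc l) j + a * \<beta> - b * \<eta> = 0" using jz by simp
    have ghn: "gh l n = 0" if "n < N" "n \<noteq> j" for n
    proof -
      have "(\<Prod>i\<in>{..<N}-{n}. (\<eta> * z (Suc l) i + a * \<beta> - b * \<eta>) / (z (Suc l) n - z (Suc l) i)) = 0"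
        by (rule prod_zero) (use that j K0 in auto)
      thus ?thesis unfolding gh_def ghat_def by simp
    qed
    have dj: "d = \<gamma> * gh l j" if i: "i < N" and d: "d = z (Suc (Suc l)) i - a * z (Suc l) j - b" for i d
    proof -
      have "(\<Sum>k<N. gh l k / (z (Suc (Suc l)) i - a * z (Suc l) k - b))
          = gh l j / (z (Suc (Suc l)) i - a * z (Suc l) j - b) + (\<Sum>k\<in>{..<N}-{j}. gh l k / (z (Suc (Suc l)) i - a * z (Suc l) k - b))"
        by (rule sum.remove) (use j in auto)
      also have "(\<Sum>k\<in>{..<N}-{j}. gh l k / (z (Suc (Suc l)) i - a * z (Suc l) k - b)) = 0"
        by (rule sum.neutral) (use ghn in auto)
      finally have "gh l j / d = 1 / \<gamma>" using sec[OF i] d by simp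
      moreover have "d \<noteq> 0" using den2[OF i j(1), of "Suc l"] d by simp
      ultimately show ?thesis using \<gamma>0 by (simp add: field_simps)
    qed
    have "z (Suc (Suc l)) m = (z (Suc (Suc l)) m - a * z (Suc l) j - b) + a * z (Suc l) j + b" by simp
    also have "\<dots> = (z (Suc (Suc l)) j - a * z (Suc l) j - b) + a * z (Suc l) j + b"
      unfolding dj[OF m refl] dj[OF j(1) refl] ..
    also have "\<dots> = z (Suc (Suc l)) j" by simp
    finally have "z (Suc (Suc l)) m = z (Suc (Suc l)) j" .
    hence "m = j" using distinct[of "Suc (Suc l)"] j m unfolding inj_on_def by blast
    thus False using j by simp
  qed

  have injy: "inj_on (\<lambda>n. a * z l n + b) {..<N}" for l
    using distinct[of l] a0 unfolding inj_on_def by auto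
  have xy: "z (Suc l) m \<noteq> a * z l n + b" if "m < N" "n < N" for l m n
  proof
    assume "z (Suc l) m = a * z l n + b"
    thus False using den2[OF that, of l] by simp
  qed

  text \<open>the Cauchy-like matrix and its inverse\<close>
  have TS: "Tm l * Sm l = 1\<^sub>m N" for l
  proof (rule eq_matI)
    fix i j assume "i < dim_row (1\<^sub>m N)" "j < dim_col (1\<^sub>m N)"
    hence i: "i < N" and j: "j < N" by auto
    have "(Tm l * Sm l) $$ (i,j) = (\<Sum>n<N. Tm l $$ (i,n) * Sm l $$ (n,j))" by (rule mult_entry[OF cT cS i j])
    also have "\<dots> = (\<Sum>n<N. (gh l j / gh l i) * (Am l i * Bm l n / ((a * z l n + b) - z (Suc l) i) / (z (Suc l) j - (a * z l n + b))))"
    proof (rule sum.cong[OF refl])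
      fix n assume "n \<in> {..<N}" hence n: "n < N" by simp
      have e: "z (Suc l) j - a * z l n - b = z (Suc l) j - (a * z l n + b)" by simp
      show "Tm l $$ (i,n) * Sm l $$ (n,j) = (gh l j / gh l i) * (Am l i * Bm l n / ((a * z l n + b) - z (Suc l) i) / (z (Suc l) j - (a * z l n + b)))"
        unfolding Tm_def Sm_def using i j n by (simp add: e ac_simps)
    qed
    also have "\<dots> = (gh l j / gh l i) * (\<Sum>n<N. Am l i * Bm l n / ((a * z l n + b) - z (Suc l) i) / (z (Suc l) j - (a * z l n + b)))"
      by (simp add: sum_distrib_left)
    also have "(\<Sum>n<N. Am l i * Bm l n / ((a * z l n + b) - z (Suc l) i) / (z (Suc l) j - (a * z l n + b))) = (if i = j then 1 else 0)"
      unfolding Am_def Bm_def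
      by (rule cauchy_sum[of "z (Suc l)" N "\<lambda>n. a * z l n + b"]) (use distinct injy xy i j in auto)
    also have "(gh l j / gh l i) * (if i = j then 1 else 0) = 1\<^sub>m N $$ (i,j)" using i j gh_nz[OF i] by (cases "i = j") auto
    finally show "(Tm l * Sm l) $$ (i,j) = 1\<^sub>m N $$ (i,j)" .
  qed (auto simp: Tm_def Sm_def)
  have ST: "Sm l * Tm l = 1\<^sub>m N" for l by (rule mat_mult_left_right_inverse[OF cT cS TS])

  have DG: "Dv l' * Gr l = mat N N (\<lambda>(i,j). 1 / (\<eta> * z l' i + \<beta>) * gh l j)" for l' l
    unfolding Dv_def mat_diag_mult_left[OF cGr] by (rule eq_matI) (auto simp: Gr_def)
  have KIm: "Sm l * (Dv (Suc l) * Gr l) = Dv l * Gr l" for l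
  proof (rule eq_matI)
    fix i j assume "i < dim_row (Dv l * Gr l)" "j < dim_col (Dv l * Gr l)"
    hence i: "i < N" and j: "j < N" by (auto simp: Dv_def Gr_def mat_diag_def)
    have "(Sm l * (Dv (Suc l) * Gr l)) $$ (i,j) = (\<Sum>k<N. Sm l $$ (i,k) * (Dv (Suc l) * Gr l) $$ (k,j))"
      by (rule mult_entry[OF cS mult_carrier_mat[OF cDv cGr] i j])
    also have "\<dots> = (\<Sum>k<N. gh l j * (ghat N a b \<eta> \<beta> (z l) (z (Suc l)) k / (z (Suc l) k - a * z l i - b) * (1 / (\<eta> * z (Suc l) k + \<beta>))))"
      by (rule sum.cong[OF refl]) (use i j in \<open>auto simp: Sm_def DG gh_def ac_simps\<close>)
    also have "\<dots> = gh l j * (1 / (\<eta> * z l i + \<beta>))"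
      unfolding sum_distrib_left[symmetric]
      by (subst KI[where z="z l" and z'="z (Suc l)", OF N distinct den1 den1 den2 a0 i]) simp_all
    also have "\<dots> = (Dv l * Gr l) $$ (i,j)" unfolding DG using i j by simp
    finally show "(Sm l * (Dv (Suc l) * Gr l)) $$ (i,j) = (Dv l * Gr l) $$ (i,j)" .
  qed (auto simp: Dv_def Gr_def Sm_def mat_diag_def)
  have TKI: "Tm l * (Dv l * Gr l) = Dv (Suc l) * Gr l" for l
  proof -
    have "Tm l * (Dv l * Gr l) = Tm l * (Sm l * (Dv (Suc l) * Gr l))" unfolding KIm ..
    also have "\<dots> = (Tm l * Sm l) * (Dv (Suc l) * Gr l)"
      by (rule assoc_mult_mat[OF cT cS mult_carrier_mat[OF cDv cGr], symmetric])
    also have "\<dots> = Dv (Suc l) * Gr l" unfolding TS by (rule left_mult_one_mat[OF mult_carrier_mat[OF cDv cGr]])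
    finally show ?thesis .
  qed
  have f5: "Gr l * Sm (Suc l) = (1 / \<gamma>) \<cdot>\<^sub>m Gr (Suc l)" for l
  proof (rule eq_matI)
    fix i j assume "i < dim_row ((1 / \<gamma>) \<cdot>\<^sub>m Gr (Suc l))" "j < dim_col ((1 / \<gamma>) \<cdot>\<^sub>m Gr (Suc l))"
    hence i: "i < N" and j: "j < N" by (auto simp: Gr_def)
    have "(Gr l * Sm (Suc l)) $$ (i,j) = (\<Sum>k<N. Gr l $$ (i,k) * Sm (Suc l) $$ (k,j))"
      by (rule mult_entry[OF cGr cS i j])
    also have "\<dots> = (\<Sum>k<N. gh (Suc l) j * (gh l k / (z (Suc (Suc l)) j - a * z (Suc l) k - b)))"
      by (rule sum.cong[OF refl]) (use i j in \<open>auto simp: Sm_def Gr_def ac_simps\<close>)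
    also have "\<dots> = gh (Suc l) j * (1 / \<gamma>)" unfolding sum_distrib_left[symmetric] sec[OF j] ..
    also have "\<dots> = ((1 / \<gamma>) \<cdot>\<^sub>m Gr (Suc l)) $$ (i,j)" using i j by (simp add: Gr_def)
    finally show "(Gr l * Sm (Suc l)) $$ (i,j) = ((1 / \<gamma>) \<cdot>\<^sub>m Gr (Suc l)) $$ (i,j)" .
  qed (auto simp: Gr_def Sm_def)
  have f6: "(a \<cdot>\<^sub>m Z l + b \<cdot>\<^sub>m 1\<^sub>m N) * Sm l + Gr l = Sm l * Z (Suc l)" for l
  proof -
    have aux: "(c + d) * (g / (x - c - d)) + g = g / (x - c - d) * x" if "x - c - d \<noteq> 0" for c d g x :: complex
      using that by (simp add: field_simps)
    have "a \<cdot>\<^sub>m Z l + b \<cdot>\<^sub>m 1\<^sub>m N = mat_diag N (\<lambda>i. a * z l i + b)" unfolding Z_def by (rule diag_lin)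
    hence e1: "(a \<cdot>\<^sub>m Z l + b \<cdot>\<^sub>m 1\<^sub>m N) * Sm l = mat N N (\<lambda>(i,j). (a * z l i + b) * Sm l $$ (i,j))"
      by (simp add: mat_diag_mult_left[OF cS])
    have e2: "Sm l * Z (Suc l) = mat N N (\<lambda>(i,j). Sm l $$ (i,j) * z (Suc l) j)"
      unfolding Z_def by (rule mat_diag_mult_right[OF cS])
    show ?thesis unfolding e1 e2
    proof (rule eq_matI)
      fix i j assume ij: "i < dim_row (mat N N (\<lambda>(i,j). Sm l $$ (i,j) * z (Suc l) j))"
        "j < dim_col (mat N N (\<lambda>(i,j). Sm l $$ (i,j) * z (Suc l) j))"
      hence i: "i < N" and j: "j < N" by auto
      show "(mat N N (\<lambda>(i,j). (a * z l i + b) * Sm l $$ (i,j)) + Gr l) $$ (i,j) =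
            mat N N (\<lambda>(i,j). Sm l $$ (i,j) * z (Suc l) j) $$ (i,j)"
        using i j aux[OF den2[OF j i, of l]] by (simp add: Sm_def Gr_def)
    qed (auto simp: Gr_def)
  qed
  have EDv: "E l * Dv l = 1\<^sub>m N" "Dv l * E l = 1\<^sub>m N" for l
    unfolding Ediag Dv_def mat_diag_diag by (rule eq_matI, auto simp: mat_diag_def den1)+

  have EZ': "invertible_mat (E 0)" using EZ_inv unfolding E_def .
  have mE: "minv (E 0) = Dv 0" by (rule minv_unique[OF cE EZ' cDv EDv(1)])
  have M0S: "M0 = Sm 0" unfolding M0_def Sm_def gh_def by simp
  have mM: "minv M0 = Tm 0" unfolding M0S by (rule minv_unique[OF cS M0_inv[unfolded M0S] cT ST])
  define Y where "Y = Sm 0 * Z 1 * Tm 0 - \<alpha> \<cdot>\<^sub>m Z 0"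
  have cY: "Y \<in> carrier_mat N N" unfolding Y_def using cS cT cZ by (auto intro!: minus_carrier_mat)
  have V0e: "V0 = Dv 0 * Y" unfolding V0_def mM unfolding Y_def mE[unfolded E_def] M0S ..
  have cV0: "V0 \<in> carrier_mat N N" unfolding V0e using cDv cY by auto
  have cW: "W \<in> carrier_mat N N" unfolding W_def using cV0 by (auto intro!: minus_carrier_mat)
  have dimW[simp]: "dim_row W = N" "dim_col W = N" "dim_row V0 = N" "dim_col V0 = N" using cW cV0 by auto
  have Aeq: "A = \<eta> \<cdot>\<^sub>m W" unfolding A_def W_def using cV0
    by (intro eq_matI) (auto simp: algebra_simps)
  have Beq: "B = \<beta> \<cdot>\<^sub>m W" unfolding B_def W_def using cV0 \<beta>
    by (intro eq_matI) (auto simp: field_simps)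
  have cA: "A \<in> carrier_mat N N" unfolding Aeq using cW by simp
  have cB: "B \<in> carrier_mat N N" unfolding Beq using cW by simp
  have cU0: "U0 \<in> carrier_mat N N" unfolding U0_def by (rule cZ)
  note Urec = U_rec[OF cA cB cU0 U_def]
  have cU: "U l \<in> carrier_mat N N" for l by (rule Urec(2))
  have dimU[simp]: "dim_row (U l) = N" "dim_col (U l) = N" for l using cU by auto
  have rec: "U (Suc l) = a \<cdot>\<^sub>m U l + b \<cdot>\<^sub>m 1\<^sub>m N + \<gamma> ^ l \<cdot>\<^sub>m ((\<eta> \<cdot>\<^sub>m U l + \<beta> \<cdot>\<^sub>m 1\<^sub>m N) * W)" for l
  proof -
    define UW where "UW = U l * W"
    have cUW: "UW \<in> carrier_mat N N" unfolding UW_def by (rule mult_carrier_mat[OF cU cW])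
    have r1: "U l * (\<gamma> ^ l \<cdot>\<^sub>m A + a \<cdot>\<^sub>m 1\<^sub>m N) = \<gamma> ^ l \<cdot>\<^sub>m (\<eta> \<cdot>\<^sub>m UW) + a \<cdot>\<^sub>m U l"
      unfolding Aeq UW_def using cU cW
      by (simp add: mult_add_distrib_mat[of _ N N _ N] mult_smult_distrib[of _ N N _ N])
    have r2: "(\<eta> \<cdot>\<^sub>m U l + \<beta> \<cdot>\<^sub>m 1\<^sub>m N) * W = \<eta> \<cdot>\<^sub>m UW + \<beta> \<cdot>\<^sub>m W"
      unfolding UW_def using cU cW
      by (simp add: add_mult_distrib_mat[of _ N N _ _ N] mult_smult_assoc_mat[of _ N N _ N])
    have "U (Suc l) = \<gamma> ^ l \<cdot>\<^sub>m (\<eta> \<cdot>\<^sub>m UW) + a \<cdot>\<^sub>m U l + (\<gamma> ^ l \<cdot>\<^sub>m (\<beta> \<cdot>\<^sub>m W) + b \<cdot>\<^sub>m 1\<^sub>m N)"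
      unfolding Urec(1) r1 Beq ..
    also have "\<dots> = a \<cdot>\<^sub>m U l + b \<cdot>\<^sub>m 1\<^sub>m N + \<gamma> ^ l \<cdot>\<^sub>m (\<eta> \<cdot>\<^sub>m UW + \<beta> \<cdot>\<^sub>m W)"
      using cU cW cUW by (intro eq_matI) (auto simp: algebra_simps)
    finally show ?thesis unfolding r2 .
  qed
  have U0Z: "U 0 = Z 0"
    using U_def[of 0] cZ unfolding U0_def mat_prod_list_def mat_sum_list_def by (simp add: Z_def mat_diag_def)

  have smult_conj: "c \<cdot>\<^sub>m (R * M * Ri) = R * (c \<cdot>\<^sub>m M) * Ri"
    if "R \<in> carrier_mat N N" "M \<in> carrier_mat N N" "Ri \<in> carrier_mat N N" for R M Ri :: "complex mat" and c :: complex
  proof -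
    have "R * (c \<cdot>\<^sub>m M) * Ri = (c \<cdot>\<^sub>m (R * M)) * Ri" unfolding mult_smult_distrib[OF that(1,2)] ..
    also have "\<dots> = c \<cdot>\<^sub>m (R * M * Ri)" by (rule mult_smult_assoc_mat[OF mult_carrier_mat[OF that(1,2)] that(3)])
    finally show ?thesis ..
  qed
  have smult_pow: "\<gamma> ^ Suc k \<cdot>\<^sub>m M = \<gamma> \<cdot>\<^sub>m (\<gamma> ^ k \<cdot>\<^sub>m M)" for k and M :: "complex mat"
    by (intro eq_matI) auto
  have g1: "1 - \<gamma> \<noteq> 0" using \<gamma>1 by simp
  have ab: "\<alpha> + b / \<beta> * \<eta> = a" unfolding a_def b_def using \<beta> g1 by (simp add: field_simps)

  define Inv where "Inv l \<longleftrightarrow> (\<exists>R Ri. R \<in> carrier_mat N N \<and> Ri \<in> carrier_mat N N \<and> R * Ri = 1\<^sub>m N \<and>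
      Ri * R = 1\<^sub>m N \<and> U l = R * Z l * Ri \<and> \<gamma> ^ (l - 1) \<cdot>\<^sub>m (Ri * W * R) = Dv l * Gr (l - 1))" for l

  have EW: "E 0 * W = Y - (b / \<beta>) \<cdot>\<^sub>m E 0"
  proof -
    have "E 0 * W = E 0 * (Dv 0 * Y) - E 0 * ((b / \<beta>) \<cdot>\<^sub>m 1\<^sub>m N)"
      unfolding W_def V0e by (rule mult_minus_distrib_mat) (use cE cDv cY in auto)
    also have "E 0 * (Dv 0 * Y) = (E 0 * Dv 0) * Y" by (rule assoc_mult_mat[OF cE cDv cY, symmetric])
    also have "\<dots> = Y" unfolding EDv using cY by simp
    also have "E 0 * ((b / \<beta>) \<cdot>\<^sub>m 1\<^sub>m N) = (b / \<beta>) \<cdot>\<^sub>m E 0"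
      using cE[of 0] by (simp add: mult_smult_distrib[of _ N N _ N])
    finally show ?thesis .
  qed
  have Inv1: "Inv 1"
  proof -
    define P where "P = Sm 0 * Z 1 * Tm 0"
    have cP: "P \<in> carrier_mat N N" unfolding P_def using cS cZ cT by (auto intro!: mult_carrier_mat)
    have Ye: "Y = P - \<alpha> \<cdot>\<^sub>m Z 0" unfolding Y_def P_def ..
    have "U 1 = a \<cdot>\<^sub>m Z 0 + b \<cdot>\<^sub>m 1\<^sub>m N + 1 \<cdot>\<^sub>m (E 0 * W)"
      using rec[of 0] unfolding U0Z E_def by simp
    also have "\<dots> = P" unfolding EW unfolding Ye E_def using cP cZ \<beta>
      by (intro eq_matI) (auto simp: field_simps ab[symmetric])
    finally have U1: "U 1 = Sm 0 * Z 1 * Tm 0" unfolding P_def .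
    have EWS: "E 0 * (W * Sm 0) = Gr 0"
    proof -
      have "E 0 * (W * Sm 0) = (E 0 * W) * Sm 0" by (rule assoc_mult_mat[OF cE cW cS, symmetric])
      also have "\<dots> = P * Sm 0 - \<alpha> \<cdot>\<^sub>m (Z 0 * Sm 0) - (b / \<beta>) \<cdot>\<^sub>m (E 0 * Sm 0)"
        unfolding EW Ye using cP cZ[of 0] cE[of 0] cS[of 0]
        by (simp add: minus_mult_distrib_mat[of _ N N _ _ N] mult_smult_assoc_mat[of _ N N _ N] minus_carrier_mat)
      also have "P * Sm 0 = Sm 0 * Z 1"
      proof -
        have "P * Sm 0 = Sm 0 * Z 1 * (Tm 0 * Sm 0)" unfolding P_def using cS[of 0] cZ[of 1] cT[of 0]
          by (simp add: assoc_mult_mat[of _ N N _ N _ N])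
        also have "\<dots> = Sm 0 * Z 1" unfolding TS using cS cZ by simp
        finally show ?thesis .
      qed
      also have "Sm 0 * Z 1 = mat N N (\<lambda>(i,j). Sm 0 $$ (i,j) * z 1 j)"
        unfolding Z_def by (rule mat_diag_mult_right[OF cS])
      also have "Z 0 * Sm 0 = mat N N (\<lambda>(i,j). z 0 i * Sm 0 $$ (i,j))"
        unfolding Z_def by (rule mat_diag_mult_left[OF cS])
      also have "E 0 * Sm 0 = mat N N (\<lambda>(i,j). (\<eta> * z 0 i + \<beta>) * Sm 0 $$ (i,j))"
        unfolding Ediag by (rule mat_diag_mult_left[OF cS])
      also have "mat N N (\<lambda>(i,j). Sm 0 $$ (i,j) * z 1 j) - \<alpha> \<cdot>\<^sub>m mat N N (\<lambda>(i,j). z 0 i * Sm 0 $$ (i,j))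
          - (b / \<beta>) \<cdot>\<^sub>m mat N N (\<lambda>(i,j). (\<eta> * z 0 i + \<beta>) * Sm 0 $$ (i,j)) = Gr 0"
      proof (rule eq_matI)
        fix i j assume "i < dim_row (Gr 0)" "j < dim_col (Gr 0)"
        hence i: "i < N" and j: "j < N" by auto
        have d: "z 1 j - a * z 0 i - b \<noteq> 0" using den2[OF j i, of 0] by simp
        have e3: "z 1 j - a * z 0 i - b = z 1 j - (\<alpha> + b / \<beta> * \<eta>) * z 0 i - b" unfolding ab ..
        have aux: "g / u * x - al * (y * (g / u)) - bb / be * ((et * y + be) * (g / u)) = g"
          if "u \<noteq> 0" "be \<noteq> 0" "u = x - (al + bb / be * et) * y - bb" for g u x al y bb be et :: complex
        proof -
          have x: "x = u + (al + bb / be * et) * y + bb" using that(3) by simp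
          show ?thesis unfolding x using that(1,2) by (simp add: field_simps)
        qed
        show "(mat N N (\<lambda>(i,j). Sm 0 $$ (i,j) * z 1 j) - \<alpha> \<cdot>\<^sub>m mat N N (\<lambda>(i,j). z 0 i * Sm 0 $$ (i,j))
          - (b / \<beta>) \<cdot>\<^sub>m mat N N (\<lambda>(i,j). (\<eta> * z 0 i + \<beta>) * Sm 0 $$ (i,j))) $$ (i,j) = Gr 0 $$ (i,j)"
          using i j aux[where g="gh 0 j" and x="z 1 j" and al=\<alpha> and y="z 0 i" and et=\<eta> and bb=b and be=\<beta>
              and u="z 1 j - a * z 0 i - b", OF d \<beta> e3] by (simp add: Sm_def Gr_def)
      qed auto
      finally show ?thesis .
    qed
    have WS: "W * Sm 0 = Dv 0 * Gr 0"
    proof -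
      have "W * Sm 0 = (Dv 0 * E 0) * (W * Sm 0)" unfolding EDv using cW cS by simp
      also have "\<dots> = Dv 0 * (E 0 * (W * Sm 0))" by (rule assoc_mult_mat[OF cDv cE mult_carrier_mat[OF cW cS]])
      finally show ?thesis unfolding EWS .
    qed
    have "Tm 0 * W * Sm 0 = Tm 0 * (W * Sm 0)" by (rule assoc_mult_mat[OF cT cW cS])
    also have "\<dots> = Dv 1 * Gr 0" unfolding WS using TKI[of 0] by simp
    finally have TWS: "Tm 0 * W * Sm 0 = Dv 1 * Gr 0" .
    show ?thesis unfolding Inv_def
      by (rule exI[of _ "Sm 0"], rule exI[of _ "Tm 0"]) (use cS cT ST TS U1 TWS cDv cGr in auto)
  qed

  have Step: "Inv (Suc (Suc k))" if IH: "Inv (Suc k)" for k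
  proof -
    define l where "l = Suc k"
    from IH obtain R Ri where cR: "R \<in> carrier_mat N N" and cRi: "Ri \<in> carrier_mat N N"
      and RRi: "R * Ri = 1\<^sub>m N" and RiR: "Ri * R = 1\<^sub>m N" and Ul: "U l = R * Z l * Ri"
      and Wl: "\<gamma> ^ k \<cdot>\<^sub>m (Ri * W * R) = Dv l * Gr k"
      unfolding Inv_def l_def by auto
    define X where "X = Ri * W * R"
    have cX: "X \<in> carrier_mat N N" unfolding X_def using cRi cW cR by auto
    define S where "S = Sm l"
    define T where "T = Tm l"
    have cS': "S \<in> carrier_mat N N" "T \<in> carrier_mat N N" unfolding S_def T_def using cS cT by auto
    have h1: "\<gamma> ^ l \<cdot>\<^sub>m (E l * X) = \<gamma> \<cdot>\<^sub>m Gr k"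
    proof -
      have "\<gamma> ^ k \<cdot>\<^sub>m (E l * X) = E l * (\<gamma> ^ k \<cdot>\<^sub>m X)" using cE[of l] cX by (simp add: mult_smult_distrib[of _ N N _ N])
      also have "\<dots> = E l * (Dv l * Gr k)" using Wl unfolding X_def by simp
      also have "\<dots> = (E l * Dv l) * Gr k" by (rule assoc_mult_mat[OF cE cDv cGr, symmetric])
      also have "\<dots> = Gr k" unfolding EDv using cGr by simp
      finally show ?thesis unfolding l_def smult_pow by simp
    qed
    define Xm where "Xm = a \<cdot>\<^sub>m Z l + b \<cdot>\<^sub>m 1\<^sub>m N + \<gamma> \<cdot>\<^sub>m Gr k"
    have cXm: "Xm \<in> carrier_mat N N" unfolding Xm_def using cZ cGr by auto
    have h2: "U (Suc l) = R * Xm * Ri"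
    proof -
      have "(\<eta> \<cdot>\<^sub>m U l + \<beta> \<cdot>\<^sub>m 1\<^sub>m N) * W = R * (E l * X) * Ri"
        unfolding Ul E_def X_def by (rule conj_W[OF cR cRi cZ cW RRi])
      hence "U (Suc l) = a \<cdot>\<^sub>m (R * Z l * Ri) + b \<cdot>\<^sub>m 1\<^sub>m N + \<gamma> ^ l \<cdot>\<^sub>m (R * (E l * X) * Ri)"
        using rec[of l] unfolding Ul by simp
      also have "\<gamma> ^ l \<cdot>\<^sub>m (R * (E l * X) * Ri) = R * (\<gamma> ^ l \<cdot>\<^sub>m (E l * X)) * Ri"
        by (rule smult_conj) (use cR cRi cE cX in auto)
      also have "\<dots> = \<gamma> \<cdot>\<^sub>m (R * Gr k * Ri)" unfolding h1
        by (rule smult_conj[symmetric]) (use cR cRi cGr in auto)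
      also have "a \<cdot>\<^sub>m (R * Z l * Ri) + b \<cdot>\<^sub>m 1\<^sub>m N + \<gamma> \<cdot>\<^sub>m (R * Gr k * Ri) = R * Xm * Ri"
        unfolding Xm_def by (rule conj_lin[OF cR cRi cZ cGr RRi, symmetric])
      finally show ?thesis .
    qed
    have h3: "Xm * S = S * Z (Suc l)"
    proof -
      have "Xm * S = (a \<cdot>\<^sub>m Z l + b \<cdot>\<^sub>m 1\<^sub>m N) * S + (\<gamma> \<cdot>\<^sub>m Gr k) * S"
        unfolding Xm_def by (rule add_mult_distrib_mat) (use cZ cGr cS' in auto)
      also have "(\<gamma> \<cdot>\<^sub>m Gr k) * S = \<gamma> \<cdot>\<^sub>m (Gr k * S)" by (rule mult_smult_assoc_mat[OF cGr cS'(1)])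
      also have "Gr k * S = (1 / \<gamma>) \<cdot>\<^sub>m Gr l" unfolding S_def l_def by (rule f5)
      also have "\<gamma> \<cdot>\<^sub>m ((1 / \<gamma>) \<cdot>\<^sub>m Gr l) = Gr l" using \<gamma>0 by (intro eq_matI) auto
      also have "(a \<cdot>\<^sub>m Z l + b \<cdot>\<^sub>m 1\<^sub>m N) * S + Gr l = S * Z (Suc l)" unfolding S_def by (rule f6)
      finally show ?thesis .
    qed
    have h4: "Xm = S * Z (Suc l) * T"
    proof -
      have "Xm = Xm * (S * T)" unfolding S_def T_def ST using cXm by simp
      also have "\<dots> = (Xm * S) * T" by (rule assoc_mult_mat[OF cXm cS'(1) cS'(2), symmetric])
      finally show ?thesis unfolding h3 .
    qed
    have U2: "U (Suc l) = (R * S) * Z (Suc l) * (T * Ri)"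
      unfolding h2 h4 using cR cRi cS' cZ[of "Suc l"] by (simp add: assoc_mult_mat[of _ N N _ N _ N])
    have inv1: "(R * S) * (T * Ri) = 1\<^sub>m N"
    proof -
      have "(R * S) * (T * Ri) = R * ((S * T) * Ri)" using cR cRi cS' by (simp add: assoc_mult_mat[of _ N N _ N _ N])
      also have "\<dots> = 1\<^sub>m N" unfolding S_def T_def ST using cRi RRi by simp
      finally show ?thesis .
    qed
    have inv2: "(T * Ri) * (R * S) = 1\<^sub>m N"
    proof -
      have "(T * Ri) * (R * S) = T * ((Ri * R) * S)" using cR cRi cS' by (simp add: assoc_mult_mat[of _ N N _ N _ N])
      also have "\<dots> = 1\<^sub>m N" unfolding S_def T_def RiR using TS cS by simp
      finally show ?thesis .
    qed
    have W2: "\<gamma> ^ l \<cdot>\<^sub>m ((T * Ri) * W * (R * S)) = Dv (Suc l) * Gr l"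
    proof -
      have "(T * Ri) * W * (R * S) = T * X * S" unfolding X_def using cR cRi cS' cW
        by (simp add: assoc_mult_mat[of _ N N _ N _ N])
      hence "\<gamma> ^ l \<cdot>\<^sub>m ((T * Ri) * W * (R * S)) = \<gamma> \<cdot>\<^sub>m (T * (\<gamma> ^ k \<cdot>\<^sub>m X) * S)"
        unfolding l_def smult_pow using smult_conj[OF cS'(2) cX cS'(1)] by simp
      also have "T * (\<gamma> ^ k \<cdot>\<^sub>m X) * S = T * (Dv l * (Gr k * S))"
        unfolding X_def Wl using cS' cDv[of l] cGr[of k] by (simp add: assoc_mult_mat[of _ N N _ N _ N])
      also have "Gr k * S = (1 / \<gamma>) \<cdot>\<^sub>m Gr l" unfolding S_def l_def by (rule f5)
      also have "T * (Dv l * ((1 / \<gamma>) \<cdot>\<^sub>m Gr l)) = (1 / \<gamma>) \<cdot>\<^sub>m (T * (Dv l * Gr l))"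
        using cS' cDv[of l] cGr[of l] by (simp add: mult_smult_distrib[of _ N N _ N])
      also have "T * (Dv l * Gr l) = Dv (Suc l) * Gr l" unfolding T_def by (rule TKI)
      also have "\<gamma> \<cdot>\<^sub>m ((1 / \<gamma>) \<cdot>\<^sub>m (Dv (Suc l) * Gr l)) = Dv (Suc l) * Gr l"
        using \<gamma>0 by (intro eq_matI) auto
      finally show ?thesis .
    qed
    show ?thesis unfolding Inv_def
      by (rule exI[of _ "R * S"], rule exI[of _ "T * Ri"])
        (use cR cRi cS' inv1 inv2 U2 W2 in \<open>auto simp: l_def\<close>)
  qed
  have InvAll: "Inv (Suc k)" for k
    by (induction k) (use Inv1 Step in auto)

  show ?thesis
  proof
    fix l
    show "mset (map (z l) [0..<N]) = eigenvalue_mset (U l)"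
    proof (cases l)
      case 0
      have Ul0: "U l = mat_diag N (z l)" using 0 U0Z Z_def by simp
      show ?thesis unfolding Ul0 mset_proots_diag ..
    next
      case (Suc k)
      from InvAll[of k] obtain R Ri where cR: "R \<in> carrier_mat N N" and cRi: "Ri \<in> carrier_mat N N"
        and RRi: "R * Ri = 1\<^sub>m N" and RiR: "Ri * R = 1\<^sub>m N" and Ul: "U (Suc k) = R * Z (Suc k) * Ri"
        unfolding Inv_def by auto
      have "similar_mat (U l) (Z l)"
        by (rule similar_matI[where n=N and P=R and Q=Ri]) (use cR cRi RRi RiR Ul cU cZ Suc in auto)
      hence "char_poly (U l) = char_poly (Z l)" by (rule char_poly_similar)
      hence "eigenvalue_mset (U l) = eigenvalue_mset (Z l)" unfolding eigenvalue_mset_def by simp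
      thus ?thesis unfolding Z_def mset_proots_diag by simp
    qed
  qed
qed

end
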